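(* Let $X$ be a topological space, let $Y$ be a Urysohn space, let $S$ be a dense subset of $X$ and let $f:S\to Y$ be continuous. Then the following are equivalent: (1) $f$ has a continuous extension to $X$; (2) for every open set $V$ of $Y$ the set $X_{\theta}(f^{-1}(V))$ is open in $X$, and for every family $\{A_\beta\}$ of closed subsets of $Y$ with $\bigcap_\beta A_\beta=\emptyset$ one has $\bigcap_\beta\overline{f^{-1}(A_\beta)}=\emptyset$ (closures in $X$).
   Context: A Urysohn space is one in which any two distinct points have open neighborhoods with disjoint closures. $\mathcal N(x)$ is the set of open neighborhoods of $x$ in $X$. For $M\subseteq Y$, the $\theta$-closure $\mathrm{cl}_\theta M$ is the set of $y\in Y$ such that $\mathrm{cl}\,U\cap M\neq\emptyset$ for every open $U\ni y$. For $V\subseteq Y$, $X_\theta(f^{-1}(V))$ is the set of points $x\in X$ with $\bigcap\{\mathrm{cl}_\theta f(P\cap S):P\in\mathcal N(x)\}\subseteq V$. *)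

theory Defs
  imports "HOL-Analysis.Analysis"
begin

definition Urysohn_space :: "'a topology \<Rightarrow> bool" where
  "Urysohn_space Y \<longleftrightarrow>
     (\<forall>x\<in>topspace Y. \<forall>y\<in>topspace Y. x \<noteq> y \<longrightarrow>
        (\<exists>U V. openin Y U \<and> openin Y V \<and> x \<in> U \<and> y \<in> V \<and>
               Y closure_of U \<inter> Y closure_of V = {}))"

definition theta_closure :: "'a topology \<Rightarrow> 'a set \<Rightarrow> 'a set" where
  "theta_closure Y M =
     {y \<in> topspace Y. \<forall>U. openin Y U \<and> y \<in> U \<longrightarrow> Y closure_of U \<inter> M \<noteq> {}}"

text \<open>X_theta(f^{-1}(V)) for f defined on S.\<close>
definition X_theta :: "'a topology \<Rightarrow> 'b topology \<Rightarrow> 'a set \<Rightarrow> ('a \<Rightarrow> 'b) \<Rightarrow> 'b set \<Rightarrow> 'a set" where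
  "X_theta X Y S f V =
     {x \<in> topspace X.
        \<Inter>{theta_closure Y (f ` (P \<inter> S)) | P. openin X P \<and> x \<in> P} \<subseteq> V}"

end

theory Submission
  imports Defs
begin

definition TT :: "'a topology \<Rightarrow> 'b topology \<Rightarrow> 'a set \<Rightarrow> ('a \<Rightarrow> 'b) \<Rightarrow> 'a \<Rightarrow> 'b set" where
  "TT X Y S f x = \<Inter>{theta_closure Y (f ` (P \<inter> S)) | P. openin X P \<and> x \<in> P}"

lemma TT_mem: "y \<in> TT X Y S f x \<longleftrightarrow> (\<forall>P. openin X P \<and> x \<in> P \<longrightarrow> y \<in> theta_closure Y (f ` (P \<inter> S)))"
  unfolding TT_def by blast

lemma X_theta_TT: "X_theta X Y S f V = {x \<in> topspace X. TT X Y S f x \<subseteq> V}"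
  unfolding X_theta_def TT_def by blast

lemma TT_topspace: "x \<in> topspace X \<Longrightarrow> TT X Y S f x \<subseteq> topspace Y"
proof
  fix y assume "x \<in> topspace X" "y \<in> TT X Y S f x"
  then have "y \<in> theta_closure Y (f ` (topspace X \<inter> S))" unfolding TT_mem by auto
  then show "y \<in> topspace Y" unfolding theta_closure_def by blast
qed

lemma UrysD:
  assumes "Urysohn_space Y" "a \<in> topspace Y" "b \<in> topspace Y" "a \<noteq> b"
  obtains U V where "openin Y U" "openin Y V" "a \<in> U" "b \<in> V"
     "Y closure_of U \<inter> Y closure_of V = {}"
  using assms unfolding Urysohn_space_def by meson

lemma dense_meet:
  assumes "X closure_of S = topspace X" "openin X P" "x \<in> P"
  shows "\<exists>s\<in>S. s \<in> P"
proof -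
  have "x \<in> topspace X" using openin_subset[OF assms(2)] assms(3) by blast
  then have "x \<in> X closure_of S" using assms by simp
  then show ?thesis using assms unfolding in_closure_of by blast
qed

lemma TT_closure:
  assumes "y \<in> TT X Y S f x" "x \<in> topspace X" "openin Y U" "y \<in> U"
  shows "x \<in> X closure_of {s\<in>S. f s \<in> Y closure_of U}"
proof -
  have "\<exists>z. z \<in> {s\<in>S. f s \<in> Y closure_of U} \<and> z \<in> T" if T: "x \<in> T \<and> openin X T" for T
  proof -
    have "y \<in> theta_closure Y (f ` (T \<inter> S))" using assms(1)[unfolded TT_mem] T by simp
    then have "Y closure_of U \<inter> f ` (T \<inter> S) \<noteq> {}" using assms(3,4) unfolding theta_closure_def by blast
    then show ?thesis by blast
  qed
  then show ?thesis unfolding in_closure_of using assms(2) by blast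
qed

lemma dir1:
  fixes X :: "'a topology" and Y :: "'b topology"
    and S :: "'a set" and f :: "'a \<Rightarrow> 'b"
  assumes "Urysohn_space Y"
    and "S \<subseteq> topspace X" and "X closure_of S = topspace X"
    and "continuous_map (subtopology X S) Y f"
    and "\<exists>g. continuous_map X Y g \<and> (\<forall>x\<in>S. g x = f x)"
  shows 
"((\<forall>V. openin Y V \<longrightarrow> openin X (X_theta X Y S f V)) \<and>
          (\<forall>\<A>. (\<forall>A\<in>\<A>. closedin Y A) \<and> topspace Y \<inter> \<Inter>\<A> = {} \<longrightarrow>
                topspace X \<inter> (\<Inter>A\<in>\<A>. X closure_of {s\<in>S. f s \<in> A}) = {}))"
proof -
  obtain g where g: "continuous_map X Y g" "\<And>x. x \<in> S \<Longrightarrow> g x = f x" using assms(5) by blast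
  have gY: "g x \<in> topspace Y" if "x \<in> topspace X" for x
    using g(1) that unfolding continuous_map_def by auto
  have TTg: "TT X Y S f x = {g x}" if x: "x \<in> topspace X" for x
  proof
    show "{g x} \<subseteq> TT X Y S f x"
    proof -
      have "g x \<in> TT X Y S f x" unfolding TT_mem
      proof (intro allI impI)
        fix P assume P: "openin X P \<and> x \<in> P"
        show "g x \<in> theta_closure Y (f ` (P \<inter> S))" unfolding theta_closure_def
        proof (intro CollectI conjI allI impI)
          show "g x \<in> topspace Y" by (rule gY[OF x])
          fix U assume U: "openin Y U \<and> g x \<in> U"
          have o1: "openin X {z \<in> topspace X. g z \<in> U}"
            using U g(1) openin_continuous_map_preimage by blast
          have o: "openin X (P \<inter> {z \<in> topspace X. g z \<in> U})"
            using P o1 by (simp add: openin_Int)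
          have "x \<in> P \<inter> {z \<in> topspace X. g z \<in> U}" using P U x by simp
          then obtain s where s: "s \<in> S" "s \<in> P \<inter> {z \<in> topspace X. g z \<in> U}"
            using dense_meet[OF assms(3) o] by blast
          have sub: "U \<subseteq> Y closure_of U" using U closure_of_subset[OF openin_subset[of Y U]] by simp
          have "f s \<in> U" using s g(2)[OF s(1)] by simp
          then have "f s \<in> Y closure_of U" using sub by blast
          moreover have "f s \<in> f ` (P \<inter> S)" using s by blast
          ultimately show "Y closure_of U \<inter> f ` (P \<inter> S) \<noteq> {}" by blast
        qed
      qed
      then show ?thesis by simp
    qed
    show "TT X Y S f x \<subseteq> {g x}"
    proof
      fix y assume y: "y \<in> TT X Y S f x"
      show "y \<in> {g x}"
      proof (rule ccontr)
        assume ne: "y \<notin> {g x}"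
        have "y \<in> topspace Y" using subsetD[OF TT_topspace[OF x] y] .
        then obtain U W where UW: "openin Y U" "openin Y W" "g x \<in> U" "y \<in> W"
          "Y closure_of U \<inter> Y closure_of W = {}"
          using UrysD[OF assms(1) gY[OF x] \<open>y \<in> topspace Y\<close>] ne by blast
        let ?P = "{z \<in> topspace X. g z \<in> U}"
        have "openin X ?P" using g(1) UW openin_continuous_map_preimage by blast
        moreover have "x \<in> ?P" using x UW by auto
        ultimately have "y \<in> theta_closure Y (f ` (?P \<inter> S))" using y[unfolded TT_mem] by simp
        then have "Y closure_of W \<inter> f ` (?P \<inter> S) \<noteq> {}" using UW unfolding theta_closure_def by blast
        then obtain s where s: "s \<in> S" "g s \<in> U" "f s \<in> Y closure_of W" by blast
        have "f s \<in> U" using s g(2)[OF s(1)] by simp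
        then have "f s \<in> Y closure_of U" using closure_of_subset[OF openin_subset[OF UW(1)]] by blast
        then show False using s UW(5) by blast
      qed
    qed
  qed
  show "(\<forall>V. openin Y V \<longrightarrow> openin X (X_theta X Y S f V)) \<and>
          (\<forall>\<A>. (\<forall>A\<in>\<A>. closedin Y A) \<and> topspace Y \<inter> \<Inter>\<A> = {} \<longrightarrow>
                topspace X \<inter> (\<Inter>A\<in>\<A>. X closure_of {s\<in>S. f s \<in> A}) = {})"
  proof (intro conjI allI impI)
    fix V assume V: "openin Y V"
    have "X_theta X Y S f V = {x \<in> topspace X. g x \<in> V}"
      unfolding X_theta_TT by (rule Collect_cong) (simp add: TTg cong: conj_cong)
    then show "openin X (X_theta X Y S f V)" using V g(1) openin_continuous_map_preimage by simp
  next
    fix \<A> :: "'b set set"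
    assume A: "(\<forall>A\<in>\<A>. closedin Y A) \<and> topspace Y \<inter> \<Inter>\<A> = {}"
    show "topspace X \<inter> (\<Inter>A\<in>\<A>. X closure_of {s\<in>S. f s \<in> A}) = {}"
    proof (rule ccontr)
      assume "topspace X \<inter> (\<Inter>A\<in>\<A>. X closure_of {s\<in>S. f s \<in> A}) \<noteq> {}"
      then obtain x where x: "x \<in> topspace X" "\<And>A. A \<in> \<A> \<Longrightarrow> x \<in> X closure_of {s\<in>S. f s \<in> A}" by blast
      have "g x \<in> A" if "A \<in> \<A>" for A
      proof -
        have "{s\<in>S. f s \<in> A} \<subseteq> {z \<in> topspace X. g z \<in> A}" using assms(2) g(2) by auto
        moreover have "closedin X {z \<in> topspace X. g z \<in> A}"
          using g(1) A that closedin_continuous_map_preimage by blast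
        ultimately have "X closure_of {s\<in>S. f s \<in> A} \<subseteq> {z \<in> topspace X. g z \<in> A}"
          by (rule closure_of_minimal)
        then show ?thesis using x that by blast
      qed
      then show False using A gY[OF x(1)] by blast
    qed
  qed
qed

lemma dir2:
  fixes X :: "'a topology" and Y :: "'b topology"
    and S :: "'a set" and f :: "'a \<Rightarrow> 'b"
  assumes "Urysohn_space Y"
    and "S \<subseteq> topspace X" and "X closure_of S = topspace X"
    and "continuous_map (subtopology X S) Y f"
    and H: "((\<forall>V. openin Y V \<longrightarrow> openin X (X_theta X Y S f V)) \<and>
          (\<forall>\<A>. (\<forall>A\<in>\<A>. closedin Y A) \<and> topspace Y \<inter> \<Inter>\<A> = {} \<longrightarrow>
                topspace X \<inter> (\<Inter>A\<in>\<A>. X closure_of {s\<in>S. f s \<in> A}) = {}))"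
  shows "\<exists>g. continuous_map X Y g \<and> (\<forall>x\<in>S. g x = f x)"
proof -
  have fS: "f s \<in> topspace Y" if "s \<in> S" for s
    using assms(2,4) that unfolding continuous_map_def by (auto simp: Pi_iff)
  have uniq: "y1 = y2" if x: "x \<in> topspace X" and y: "y1 \<in> TT X Y S f x" "y2 \<in> TT X Y S f x" for x y1 y2
  proof (rule ccontr)
    assume ne: "y1 \<noteq> y2"
    have "y1 \<in> topspace Y" "y2 \<in> topspace Y" using subsetD[OF TT_topspace[OF x] y(1)] subsetD[OF TT_topspace[OF x] y(2)] by auto
    then obtain U1 U2 where U: "openin Y U1" "openin Y U2" "y1 \<in> U1" "y2 \<in> U2"
      "Y closure_of U1 \<inter> Y closure_of U2 = {}"
      using UrysD[OF assms(1) _ _ ne] by blast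
    let ?A = "{Y closure_of U1, Y closure_of U2}"
    have "topspace X \<inter> (\<Inter>A\<in>?A. X closure_of {s\<in>S. f s \<in> A}) = {}"
    proof -
      have "(\<forall>A\<in>?A. closedin Y A) \<and> topspace Y \<inter> \<Inter>?A = {}" using U(5) by auto
      then show ?thesis using H by blast
    qed
    moreover have "x \<in> X closure_of {s\<in>S. f s \<in> Y closure_of U1}"
      using TT_closure[OF y(1) x U(1,3)] .
    moreover have "x \<in> X closure_of {s\<in>S. f s \<in> Y closure_of U2}"
      using TT_closure[OF y(2) x U(2,4)] .
    ultimately show False using x by auto
  qed
  have ex: "\<exists>y. y \<in> TT X Y S f x" if x: "x \<in> topspace X" for x
  proof (rule ccontr)
    assume no: "\<nexists>y. y \<in> TT X Y S f x"
    let ?A = "{Y closure_of (f ` (P \<inter> S)) | P. openin X P \<and> x \<in> P}"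
    have "topspace Y \<inter> \<Inter>?A = {}"
    proof (rule ccontr)
      assume "topspace Y \<inter> \<Inter>?A \<noteq> {}"
      then obtain y where y: "y \<in> topspace Y" "y \<in> \<Inter>?A" by blast
      have "y \<in> TT X Y S f x"
        unfolding TT_mem theta_closure_def
      proof (intro allI impI CollectI conjI)
        fix P U assume P: "openin X P \<and> x \<in> P" and U: "openin Y U \<and> y \<in> U"
        have "y \<in> Y closure_of (f ` (P \<inter> S))" using y P by blast
        then obtain z where "z \<in> f ` (P \<inter> S)" "z \<in> U" using U unfolding in_closure_of by blast
        moreover have "U \<subseteq> Y closure_of U" using U closure_of_subset[OF openin_subset[of Y U]] by simp
        ultimately show "Y closure_of U \<inter> f ` (P \<inter> S) \<noteq> {}" by blast
      qed (use y in auto)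
      then show False using no by blast
    qed
    moreover have "\<forall>A\<in>?A. closedin Y A" by auto
    ultimately have "topspace X \<inter> (\<Inter>A\<in>?A. X closure_of {s\<in>S. f s \<in> A}) = {}"
      using H by blast
    moreover have "x \<in> X closure_of {s\<in>S. f s \<in> A}" if "A \<in> ?A" for A
    proof -
      obtain P where P: "openin X P" "x \<in> P" "A = Y closure_of (f ` (P \<inter> S))" using \<open>A \<in> ?A\<close> by blast
      have fPS: "f ` (P \<inter> S) \<subseteq> topspace Y" using fS by blast
      have "f ` (P \<inter> S) \<subseteq> A" using P(3) closure_of_subset[OF fPS] by simp
      then have sub: "P \<inter> S \<subseteq> {s\<in>S. f s \<in> A}" by blast
      have "x \<in> X closure_of (P \<inter> S)"
        unfolding in_closure_of
      proof (intro conjI allI impI)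
        fix T assume T: "x \<in> T \<and> openin X T"
        then have "openin X (P \<inter> T)" using P by blast
        then obtain s where "s \<in> S" "s \<in> P \<inter> T" using dense_meet[OF assms(3)] P T by blast
        then show "\<exists>y. y \<in> P \<inter> S \<and> y \<in> T" by blast
      qed (use x in auto)
      then show ?thesis using closure_of_mono[OF sub] by blast
    qed
    ultimately show False using x by blast
  qed
  define g where "g x = (THE y. y \<in> TT X Y S f x)" for x
  have TTg: "TT X Y S f x = {g x}" if x: "x \<in> topspace X" for x
  proof -
    obtain y where y: "y \<in> TT X Y S f x" using ex[OF x] by blast
    have gy: "g x = y" unfolding g_def by (rule the_equality[where P="\<lambda>y. y \<in> TT X Y S f x", OF y]) (rule uniq[OF x _ y])
    show ?thesis
    proof (rule set_eqI)
      fix z show "z \<in> TT X Y S f x \<longleftrightarrow> z \<in> {g x}"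
        using gy y uniq[OF x _ y, of z] by blast
    qed
  qed
  have fT: "f s \<in> TT X Y S f s" if s: "s \<in> S" for s
    unfolding TT_mem theta_closure_def
  proof (intro allI impI CollectI conjI)
    fix P U assume P: "openin X P \<and> s \<in> P" and U: "openin Y U \<and> f s \<in> U"
    have "U \<subseteq> Y closure_of U" using U closure_of_subset[OF openin_subset[of Y U]] by simp
    then show "Y closure_of U \<inter> f ` (P \<inter> S) \<noteq> {}" using P U s by blast
  qed (use fS s in auto)
  have "continuous_map X Y g"
    unfolding continuous_map_def
  proof (intro conjI allI impI)
    show "g \<in> topspace X \<rightarrow> topspace Y"
    proof
      fix x assume x: "x \<in> topspace X"
      have "g x \<in> TT X Y S f x" using TTg[OF x] by simp
      then show "g x \<in> topspace Y" using subsetD[OF TT_topspace[OF x, of Y S f]] by blast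
    qed
  next
    fix V assume V: "openin Y V"
    have "{x \<in> topspace X. g x \<in> V} = X_theta X Y S f V"
      unfolding X_theta_TT by (rule Collect_cong) (simp add: TTg cong: conj_cong)
    then show "openin X {x \<in> topspace X. g x \<in> V}" using H V by simp
  qed
  moreover have "\<forall>x\<in>S. g x = f x"
  proof
    fix s assume s: "s \<in> S"
    then have "s \<in> topspace X" using assms(2) by blast
    then show "g s = f s" using TTg fT[OF s] by simp
  qed
  ultimately show "\<exists>g. continuous_map X Y g \<and> (\<forall>x\<in>S. g x = f x)" by blast
qed

theorem corollary3p4:
  fixes X :: "'a topology" and Y :: "'b topology"
    and S :: "'a set" and f :: "'a \<Rightarrow> 'b"
  assumes "Urysohn_space Y"
    and "S \<subseteq> topspace X" and "X closure_of S = topspace X"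
    and "continuous_map (subtopology X S) Y f"
  shows "(\<exists>g. continuous_map X Y g \<and> (\<forall>x\<in>S. g x = f x)) \<longleftrightarrow>
         ((\<forall>V. openin Y V \<longrightarrow> openin X (X_theta X Y S f V)) \<and>
          (\<forall>\<A>. (\<forall>A\<in>\<A>. closedin Y A) \<and> topspace Y \<inter> \<Inter>\<A> = {} \<longrightarrow>
                topspace X \<inter> (\<Inter>A\<in>\<A>. X closure_of {s\<in>S. f s \<in> A}) = {}))"
  using dir1[OF assms] dir2[OF assms] by blast

end
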